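(* The element $g_{-1}(x):=x-2$ lies in $\mathcal{F}_{-1}$ and is invertible in $\mathbb{K}[[x]]$, and the $\mathbb{Z}$-graded algebra $\mathcal{F}=\bigoplus_{r\in\mathbb{Z}}\mathcal{F}_r$ is isomorphic to the algebra $\mathcal{F}_0[T,T^{-1}]$ of Laurent polynomials in a variable $T$ of degree $-1$ with coefficients in $\mathcal{F}_0$, via the map sending $\rho\,T^{j}$ ($\rho\in\mathcal{F}_0$, $j\in\mathbb{Z}$) to $\rho(x)(x-2)^{j}\in\mathcal{F}_{-j}$.
   Context: $\mathbb{K}$ is one of $\mathbb{Q},\mathbb{R},\mathbb{C}$. For $r\in\mathbb{Z}$, $\mathcal{F}_r\subset\mathbb{K}[[x]]$ is the space of formal power series $\varphi$ with $\varphi(x/(x-1))=(1-x)^r\varphi(x)$. $\mathcal{F}=\bigoplus_r\mathcal{F}_r$ is the $\mathbb{Z}$-graded algebra with homogeneous components $\mathcal{F}_r$ and multiplication given on homogeneous elements by the Cauchy product (which maps $\mathcal{F}_r\times\mathcal{F}_s$ into $\mathcal{F}_{r+s}$). *)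

theory Defs
  imports "HOL-Computational_Algebra.Formal_Power_Series" "HOL-Library.Poly_Mapping"
begin

definition subst_ser :: "'a::field fps" where
  "subst_ser = fps_X * inverse (fps_X - 1)"

definition Fr :: "int \<Rightarrow> 'a::field fps set" where
  "Fr r = {\<phi>. \<phi> oo subst_ser = (1 - fps_X) powi r * \<phi>}"

text \<open>The graded algebra F = direct sum of the F_r, realised as finitely supported
  families (indexed by the degree r) with r-th component in F_r; multiplication of
  poly_mapping is the convolution, i.e. the Cauchy product on homogeneous elements
  extended bilinearly.\<close>
definition graded_F :: "(int \<Rightarrow>\<^sub>0 'a::field fps) set" where
  "graded_F = {f. \<forall>r. Poly_Mapping.lookup f r \<in> Fr r}"

text \<open>Laurent polynomials F_0[T,T^{-1}]: finitely supported families indexed by the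
  exponent j of T, with coefficients in F_0 (T has degree -1).\<close>
definition laurent_F0 :: "(int \<Rightarrow>\<^sub>0 'a::field fps) set" where
  "laurent_F0 = {c. \<forall>j. Poly_Mapping.lookup c j \<in> Fr 0}"

definition Phi :: "(int \<Rightarrow>\<^sub>0 'a::field fps) \<Rightarrow> (int \<Rightarrow>\<^sub>0 'a fps)" where
  "Phi c = (\<Sum>j\<in>Poly_Mapping.keys c. Poly_Mapping.single (- j) (Poly_Mapping.lookup c j * (fps_X - 2) powi j))"

end

theory Submission imports Defs begin

abbreviation P :: "int \<Rightarrow> 'a::field fps" where "P j \<equiv> (fps_X - 2) powi j"

lemma lookup_Phi: "Poly_Mapping.lookup (Phi c) r = Poly_Mapping.lookup c (-r) * P (-r)"
proof -
  have "Poly_Mapping.lookup (Phi c) r = (\<Sum>j\<in>Poly_Mapping.keys c. if j = -r then Poly_Mapping.lookup c j * P j else 0)"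
    unfolding Phi_def lookup_sum lookup_single when_def by (intro sum.cong) auto
  also have "\<dots> = Poly_Mapping.lookup c (-r) * P (-r)"
    by (simp add: sum.delta' in_keys_iff)
  finally show ?thesis .
qed

lemma powi_add_gen:
  fixes u :: "'a::{comm_ring_1,inverse}"
  assumes "u * inverse u = 1"
  shows "u powi (i+j) = u powi i * u powi j"
proof -
  have key: "u^a * inverse u^b = (if b \<le> a then u^(a-b) else inverse u^(b-a))" for a b
  proof (cases "b \<le> a")
    case True
    then obtain d where d: "a = b + d" using le_Suc_ex by blast
    have "u^a * inverse u^b = u^(a-b) * (u*inverse u)^b"
      unfolding d by (simp add: power_add power_mult_distrib mult_ac)
    then show ?thesis using True assms by simp
  next
    case False
    then obtain d where d: "b = a + d" using le_Suc_ex by (metis nat_le_linear)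
    have "u^a * inverse u^b = inverse u^(b-a) * (u*inverse u)^a"
      unfolding d by (simp add: power_add power_mult_distrib mult_ac)
    then show ?thesis using False assms by simp
  qed
  show ?thesis
    unfolding power_int_def
    using key[of "nat i" "nat (-j)"] key[of "nat j" "nat (-i)"]
    apply (auto simp: power_add[symmetric] mult.commute nat_add_distrib nat_diff_distrib)
    subgoal by (rule arg_cong[of _ _ "power u"]) linarith
    subgoal by (rule arg_cong[of _ _ "power (inverse u)"]) linarith
    subgoal by (rule arg_cong[of _ _ "power u"]) linarith
    subgoal by (rule arg_cong[of _ _ "power (inverse u)"]) linarith
    done
qed

lemma S0: "fps_nth (subst_ser :: 'a::field fps) 0 = 0"
  by (simp add: subst_ser_def)

lemma U_inv: "(1 - fps_X :: 'a::field fps) * inverse (1 - fps_X) = 1"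
  by (rule inverse_mult_eq_1') simp

lemma Fr_mult:
  fixes a b :: "'a::field fps"
  assumes "a \<in> Fr r" "b \<in> Fr s" shows "a * b \<in> Fr (r + s)"
proof -
  have "(a*b) oo subst_ser = (a oo subst_ser) * (b oo subst_ser)"
    by (rule fps_compose_mult_distrib) (simp add: S0)
  also have "\<dots> = ((1 - fps_X) powi r * a) * ((1 - fps_X) powi s * b)"
    using assms by (simp add: Fr_def)
  also have "\<dots> = (1 - fps_X) powi (r + s) * (a * b)"
    by (simp add: powi_add_gen[OF U_inv] mult_ac)
  finally show ?thesis by (simp add: Fr_def)
qed

lemma Fr_one: "(1 :: 'a::field fps) \<in> Fr 0"
  by (simp add: Fr_def)

lemma Fr_pow:
  fixes a :: "'a::field fps"
  assumes "a \<in> Fr r" shows "a ^ n \<in> Fr (int n * r)"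
proof (induction n)
  case 0 then show ?case using Fr_one by simp
next
  case (Suc n)
  have "a * a ^ n \<in> Fr (r + int n * r)" by (rule Fr_mult[OF assms Suc])
  then show ?case by (simp add: algebra_simps)
qed

lemma Xm2_Fr: "(fps_X - 2 :: 'a::field_char_0 fps) \<in> Fr (-1)"
proof -
  define w :: "'a fps" where "w = inverse (1 - fps_X)"
  have w: "(1 - fps_X) * w = 1" unfolding w_def by (rule U_inv)
  have S: "subst_ser = - fps_X * w"
    unfolding subst_ser_def w_def
    by (metis fps_inverse_minus minus_diff_eq mult_minus_left mult_minus_right)
  have "(fps_X - 2) oo subst_ser = subst_ser - (2 :: 'a fps)"
    by (simp add: fps_compose_sub_distrib S0)
  also have "\<dots> = w * (fps_X - 2)"
    unfolding S using w by algebra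
  finally show ?thesis by (simp add: Fr_def w_def)
qed

lemma invXm2_Fr: "inverse (fps_X - 2 :: 'a::field_char_0 fps) \<in> Fr 1"
proof -
  define w :: "'a fps" where "w = inverse (1 - fps_X)"
  have "(fps_X - 2) oo subst_ser = w * (fps_X - 2)"
    using Xm2_Fr[where 'a='a] by (simp add: Fr_def w_def)
  have "inverse (fps_X - 2 :: 'a fps) oo subst_ser = inverse ((fps_X - 2) oo subst_ser)"
    by (rule fps_inverse_compose) (simp_all add: S0)
  also have "\<dots> = inverse w * inverse (fps_X - 2)"
    using \<open>(fps_X - 2) oo subst_ser = w * (fps_X - 2)\<close> by (simp add: fps_inverse_mult)
  also have "inverse w = 1 - fps_X"
    unfolding w_def by (rule fps_inverse_idempotent) simp
  finally show ?thesis by (simp add: Fr_def)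
qed

lemma Xm2_inv: "(fps_X - 2 :: 'a::field_char_0 fps) * inverse (fps_X - 2) = 1"
  by (rule inverse_mult_eq_1') simp

lemma P_Fr: "(P j :: 'a::field_char_0 fps) \<in> Fr (-j)"
proof (cases "j \<ge> 0")
  case True
  have "(fps_X - 2 :: 'a fps) ^ nat j \<in> Fr (int (nat j) * -1)" by (rule Fr_pow[OF Xm2_Fr])
  then show ?thesis using True by (simp add: power_int_def)
next
  case False
  have "inverse (fps_X - 2 :: 'a fps) ^ nat (-j) \<in> Fr (int (nat (-j)) * 1)" by (rule Fr_pow[OF invXm2_Fr])
  then show ?thesis using False by (simp add: power_int_def)
qed

lemma P_add: "(P (i + j) :: 'a::field_char_0 fps) = P i * P j"
  by (rule powi_add_gen[OF Xm2_inv])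

lemma P_neg: "(P j :: 'a::field_char_0 fps) * P (-j) = 1"
  using P_add[of j "-j", where 'a='a] by simp

lemma Phi_eqI: "(\<And>r. Poly_Mapping.lookup a r = Poly_Mapping.lookup b r) \<Longrightarrow> a = b"
  by (rule poly_mapping_eqI)

lemma Phi_add: "Phi (a + b) = Phi a + Phi b"
  by (rule poly_mapping_eqI) (simp add: lookup_Phi lookup_add distrib_right)

lemma Phi_zero: "Phi 0 = 0"
  by (rule poly_mapping_eqI) (simp add: lookup_Phi)

lemma Phi_sum: "Phi (sum f A) = (\<Sum>x\<in>A. Phi (f x))"
  by (induction A rule: infinite_finite_induct) (simp_all add: Phi_zero Phi_add)

lemma Phi_single: "Phi (Poly_Mapping.single j x) = Poly_Mapping.single (-j) (x * P j)"
  by (rule poly_mapping_eqI) (auto simp: lookup_Phi lookup_single when_def)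

lemma pm_expand: "a = (\<Sum>j\<in>Poly_Mapping.keys a. Poly_Mapping.single j (Poly_Mapping.lookup a j))"
proof (rule poly_mapping_eqI)
  fix r
  have "Poly_Mapping.lookup (\<Sum>j\<in>Poly_Mapping.keys a. Poly_Mapping.single j (Poly_Mapping.lookup a j)) r
     = (\<Sum>j\<in>Poly_Mapping.keys a. if j = r then Poly_Mapping.lookup a j else 0)"
    unfolding lookup_sum lookup_single when_def by (intro sum.cong) auto
  also have "\<dots> = Poly_Mapping.lookup a r" by (simp add: sum.delta' in_keys_iff)
  finally show "Poly_Mapping.lookup a r = Poly_Mapping.lookup (\<Sum>j\<in>Poly_Mapping.keys a. Poly_Mapping.single j (Poly_Mapping.lookup a j)) r" ..
qed

lemma Phi_single_mult:
  "Phi (Poly_Mapping.single i x * Poly_Mapping.single j (y :: 'a::field_char_0 fps))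
   = Phi (Poly_Mapping.single i x) * Phi (Poly_Mapping.single j y)"
  by (simp add: mult_single Phi_single P_add mult_ac)

lemma Phi_mult: "Phi (a * b :: int \<Rightarrow>\<^sub>0 'a::field_char_0 fps) = Phi a * Phi b"
proof -
  let ?A = "Poly_Mapping.keys a" and ?B = "Poly_Mapping.keys b"
  let ?sa = "\<lambda>i. Poly_Mapping.single i (Poly_Mapping.lookup a i)"
  let ?sb = "\<lambda>j. Poly_Mapping.single j (Poly_Mapping.lookup b j)"
  have "a * b = (\<Sum>i\<in>?A. \<Sum>j\<in>?B. ?sa i * ?sb j)"
    by (subst pm_expand[of a], subst pm_expand[of b]) (simp add: sum_product)
  then have "Phi (a * b) = (\<Sum>i\<in>?A. \<Sum>j\<in>?B. Phi (?sa i) * Phi (?sb j))"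
    by (simp add: Phi_sum Phi_single_mult)
  also have "\<dots> = Phi (sum ?sa ?A) * Phi (sum ?sb ?B)"
    by (simp add: Phi_sum sum_product)
  finally show ?thesis by (simp only: pm_expand[symmetric])
qed

lemma Phi_Phi: "Phi (Phi (f :: int \<Rightarrow>\<^sub>0 'a::field_char_0 fps)) = f"
  by (rule poly_mapping_eqI) (simp add: lookup_Phi mult.assoc P_neg)

lemma Phi_one: "Phi (1 :: int \<Rightarrow>\<^sub>0 'a::field_char_0 fps) = 1"
  by (simp add: single_one[symmetric] Phi_single del: single_one)

theorem theorem3p4:
  fixes \<Phi> :: "(int \<Rightarrow>\<^sub>0 'a::field_char_0 fps) \<Rightarrow> (int \<Rightarrow>\<^sub>0 'a fps)"
  defines "\<Phi> \<equiv> Phi"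
  shows "(fps_X - 2 :: 'a fps) \<in> Fr (-1)
    \<and> (\<exists>\<psi>. (fps_X - 2) * \<psi> = (1 :: 'a fps))
    \<and> bij_betw \<Phi> laurent_F0 graded_F
    \<and> (\<forall>a\<in>laurent_F0. \<forall>b\<in>laurent_F0. \<Phi> (a + b) = \<Phi> a + \<Phi> b \<and> \<Phi> (a * b) = \<Phi> a * \<Phi> b)
    \<and> \<Phi> 1 = 1
    \<and> (\<forall>k::'a. \<forall>a\<in>laurent_F0.
         \<Phi> (Poly_Mapping.map (\<lambda>p. fps_const k * p) a) = Poly_Mapping.map (\<lambda>p. fps_const k * p) (\<Phi> a))"
proof -
  have bij: "bij_betw \<Phi> laurent_F0 graded_F"
  proof (rule bij_betw_byWitness[where f'=\<Phi>])
    show "\<forall>a\<in>laurent_F0. \<Phi> (\<Phi> a) = a" "\<forall>a\<in>graded_F. \<Phi> (\<Phi> a) = a"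
      by (simp_all add: \<Phi>_def Phi_Phi)
    show "\<Phi> ` laurent_F0 \<subseteq> graded_F"
    proof
      fix f assume "f \<in> \<Phi> ` laurent_F0"
      then obtain c where c: "c \<in> laurent_F0" "f = Phi c" by (auto simp: \<Phi>_def)
      have "Poly_Mapping.lookup c (-r) * P (-r) \<in> Fr (0 + - (-r))" for r :: int
        by (rule Fr_mult) (use c P_Fr[of "-r", where 'a='a] in \<open>auto simp: laurent_F0_def\<close>)
      then show "f \<in> graded_F" using c by (simp add: graded_F_def lookup_Phi)
    qed
    show "\<Phi> ` graded_F \<subseteq> laurent_F0"
    proof
      fix f assume "f \<in> \<Phi> ` graded_F"
      then obtain c where c: "c \<in> graded_F" "f = Phi c" by (auto simp: \<Phi>_def)
      have "Poly_Mapping.lookup c (-r) * P (-r) \<in> Fr (- r + - (-r))" for r :: int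
        by (rule Fr_mult) (use c P_Fr[of "-r", where 'a='a] in \<open>auto simp: graded_F_def\<close>)
      then show "f \<in> laurent_F0" using c by (simp add: laurent_F0_def lookup_Phi)
    qed
  qed
  have sc: "\<Phi> (Poly_Mapping.map (\<lambda>p. fps_const k * p) a) = Poly_Mapping.map (\<lambda>p. fps_const k * p) (\<Phi> a)" for k a
  proof -
    have "(\<lambda>p. fps_const k * p) = (*) (fps_const k)" by auto
    then show ?thesis
      by (simp add: mult_map_scale_conv_mult \<Phi>_def Phi_mult Phi_single)
  qed
  show ?thesis
    using Xm2_Fr Xm2_inv bij sc
    by (auto simp: \<Phi>_def Phi_add Phi_mult Phi_one)
qed

end
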